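(* For any non-negative integer $L$ and positive integers $p'$, $p$ such that $p' > p$, \[ D_{p',s}\left(\left\lceil\frac{L+r-s}{2}\right\rceil,\left\lfloor\frac{L-r+s}{2}\right\rfloor;p-r,r\right) = \sum_{j\in\mathbb{Z}}\left\{q^{j^2pp'+(rp'-sp)j}\begin{bmatrix}L\\ \left\lfloor\frac{L-r+s}{2}\right\rfloor-jp'\end{bmatrix}_{q}-q^{(jp+r)(jp'+s)}\begin{bmatrix}L\\ \left\lfloor\frac{L-r-s}{2}\right\rfloor-jp'\end{bmatrix}_{q}\right\}\ge 0, \] where $r$ and $s$ are integers such that $0 < r < p$ and $0 < s < p'$.
   Context: The $q$-binomial coefficient is $\begin{bmatrix}m\\ n\end{bmatrix}_q=\frac{(q;q)_m}{(q;q)_n(q;q)_{m-n}}$ for $m\ge n\ge 0$ and $0$ otherwise, where $(a;q)_L=\prod_{k=0}^{L-1}(1-aq^k)$. For integers $K,i$ and parameters $N,M,\alpha,\beta$, \[ D_{K,i}(N,M;\alpha,\beta)=\sum_{j\in\mathbb{Z}}\left\{q^{j((\alpha+\beta)Kj+K\beta-(\alpha+\beta)i)}\begin{bmatrix}M+N\\ M-Kj\end{bmatrix}_{q}-q^{((\alpha+\beta)j+\beta)(Kj+i)}\begin{bmatrix}M+N\\ M-Kj-i\end{bmatrix}_{q}\right\}. \] (Andrews et al. showed this is the generating function of partitions with at most $M$ parts, largest part at most $N$, and hook-difference restrictions on the $(1-\beta)$th and $(\alpha-1)$th diagonals, for $\alpha,\beta$ non-negative integers, $0<i<K$, $\beta-i\le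 N-M\le K-\alpha-i$.) "$P(q)\ge 0$" means the power series $P(q)$ has non-negative coefficients. *)

theory Defs
  imports "HOL-Computational_Algebra.Formal_Laurent_Series"
begin

text \<open>Power series in q are modelled as formal Laurent series over the rationals
  (a field, so the quotient defining the q-binomial makes sense).\<close>

definition qpow :: "int \<Rightarrow> rat fls" where
  "qpow e = fls_X_intpow e"

definition qpoch :: "nat \<Rightarrow> rat fls" where
  "qpoch L = (\<Prod>k<L. 1 - qpow (int k + 1))"

definition qbinom :: "int \<Rightarrow> int \<Rightarrow> rat fls" where
  "qbinom m n = (if 0 \<le> n \<and> n \<le> m
      then qpoch (nat m) / (qpoch (nat n) * qpoch (nat (m - n))) else 0)"

text \<open>D_{K,i}(N,M;alpha,beta).  The sum over all integers j is written as a sum over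
  the j for which the q-binomial is nonzero (all other summands vanish); for K > 0
  these index sets are finite.\<close>
definition D :: "int \<Rightarrow> int \<Rightarrow> int \<Rightarrow> int \<Rightarrow> int \<Rightarrow> int \<Rightarrow> rat fls" where
  "D K i N M \<alpha> \<beta> =
     (\<Sum>j\<in>{j. 0 \<le> M - K*j \<and> M - K*j \<le> M + N}.
        qpow (j*((\<alpha>+\<beta>)*K*j + K*\<beta> - (\<alpha>+\<beta>)*i)) * qbinom (M + N) (M - K*j))
   - (\<Sum>j\<in>{j. 0 \<le> M - K*j - i \<and> M - K*j - i \<le> M + N}.
        qpow (((\<alpha>+\<beta>)*j + \<beta>)*(K*j + i)) * qbinom (M + N) (M - K*j - i))"

definition nonneg_coeffs :: "rat fls \<Rightarrow> bool" where
  "nonneg_coeffs P \<longleftrightarrow> (\<forall>n. fls_nth P n \<ge> 0)"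

end

theory Submission
  imports Defs
begin

lemma qpow_add: "qpow a * qpow b = qpow (a + b)"
  by (simp add: qpow_def fls_X_intpow_times_fls_X_intpow)

lemma qpow_0[simp]: "qpow 0 = 1"
  by (simp add: qpow_def)

lemma nth_qpow_times: "fls_nth (qpow e * f) n = fls_nth f (n - e)"
  by (simp add: qpow_def fls_X_intpow_times_conv_shift)

lemma one_minus_qpow_nz: "m \<ge> 1 \<Longrightarrow> 1 - qpow m \<noteq> 0"
proof
  assume "m \<ge> 1" "1 - qpow m = 0"
  hence "fls_nth (1 - qpow m) 0 = 0" by simp
  moreover have "fls_nth (qpow m) 0 = 0"
    using nth_qpow_times[of m 1 0] \<open>m \<ge> 1\<close> by simp
  ultimately show False by simp
qed

lemma qpoch_nz: "qpoch L \<noteq> 0"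
proof -
  have "\<And>a. 1 - qpow (int a + 1) \<noteq> 0" by (rule one_minus_qpow_nz) simp
  then show ?thesis unfolding qpoch_def by (auto simp: prod_zero_iff)
qed

lemma qpoch_0[simp]: "qpoch 0 = 1"
  by (simp add: qpoch_def)

lemma qpoch_Suc: "qpoch (Suc m) = qpoch m * (1 - qpow (int m + 1))"
  by (simp add: qpoch_def)

lemma qbinom_0[simp]: "n \<ge> 0 \<Longrightarrow> qbinom n 0 = 1"
  by (simp add: qbinom_def qpoch_nz)

lemma qbinom_n[simp]: "n \<ge> 0 \<Longrightarrow> qbinom n n = 1"
  by (simp add: qbinom_def qpoch_nz)

lemma qbinom_out: "k < 0 \<or> k > n \<Longrightarrow> qbinom n k = 0"
  by (auto simp add: qbinom_def)

lemma qbinom_sym: "qbinom n k = qbinom n (n - k)"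
  by (auto simp add: qbinom_def mult.commute)

lemma field_aux:
  fixes x u v A B :: "'a::field"
  assumes "u \<noteq> 0" "v \<noteq> 0" "1 - A \<noteq> 0" "1 - B \<noteq> 0"
  shows "x * (1 - A * B) / (u * (1 - A) * (v * (1 - B))) = x / (u * (v * (1 - B))) + A * (x / (u * (1 - A) * v))"
proof -
  define a where "a = 1 - A"
  define b where "b = 1 - B"
  have A: "A = 1 - a" and B: "B = 1 - b" by (simp_all add: a_def b_def)
  have "a \<noteq> 0" "b \<noteq> 0" using assms by (simp_all add: a_def b_def)
  then show ?thesis unfolding A B using assms(1,2)
    by (simp add: field_simps)
qed

lemma qbinom_pascal_mid:
  fixes a b :: nat
  shows "qbinom (int (Suc a + Suc b)) (int (Suc a)) =
     qbinom (int (Suc a + Suc b) - 1) (int (Suc a) - 1) + qpow (int (Suc a)) * qbinom (int (Suc a + Suc b) - 1) (int (Suc a))"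
proof -
  have e1: "nat (int (Suc a + Suc b)) = Suc (a + Suc b)" by simp
  have e2: "nat (int (Suc a + Suc b) - int (Suc a)) = Suc b" by simp
  have e3: "nat (int (Suc a + Suc b) - 1) = a + Suc b" by simp
  have e4: "nat (int (Suc a + Suc b) - 1 - (int (Suc a) - 1)) = Suc b" by simp
  have e5: "nat (int (Suc a + Suc b) - 1 - int (Suc a)) = b" by simp
  have e6: "nat (int (Suc a) - 1) = a" by simp
  have e7: "nat (int (Suc a)) = Suc a" by simp
  have q: "qpow (int (a + Suc b) + 1) = qpow (int a + 1) * qpow (int b + 1)"
    by (simp add: qpow_add)
  have q2: "qpow (int (Suc a)) = qpow (int a + 1)" by (simp add: add.commute)
  have "qbinom (int (Suc a + Suc b)) (int (Suc a)) = qpoch (a + Suc b) * (1 - qpow (int a + 1) * qpow (int b + 1)) /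
     (qpoch a * (1 - qpow (int a + 1)) * (qpoch b * (1 - qpow (int b + 1))))"
    unfolding qbinom_def by (simp only: e1 e2 e7 if_True qpoch_Suc q) simp
  moreover have "qbinom (int (Suc a + Suc b) - 1) (int (Suc a) - 1) = qpoch (a + Suc b) / (qpoch a * (qpoch b * (1 - qpow (int b + 1))))"
    unfolding qbinom_def by (simp only: e3 e4 e6 qpoch_Suc) simp
  moreover have "qbinom (int (Suc a + Suc b) - 1) (int (Suc a)) = qpoch (a + Suc b) / (qpoch a * (1 - qpow (int a + 1)) * qpoch b)"
    unfolding qbinom_def by (simp only: e3 e5 e7 qpoch_Suc) simp
  moreover have nzA: "1 - qpow (int a + 1) \<noteq> 0" by (rule one_minus_qpow_nz) simp
  moreover have nzB: "1 - qpow (int b + 1) \<noteq> 0" by (rule one_minus_qpow_nz) simp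
  ultimately show ?thesis unfolding q2
    by (simp only: field_aux[OF qpoch_nz qpoch_nz nzA nzB])
qed

lemma qbinom_pascal:
  assumes "n \<ge> 1"
  shows "qbinom n k = qbinom (n-1) (k-1) + qpow k * qbinom (n-1) k"
proof -
  consider "k < 0" | "k = 0" | "k = n" | "k > n" | "0 < k \<and> k < n" by linarith
  then show ?thesis
  proof cases
    case 1 then show ?thesis by (simp add: qbinom_out)
  next
    case 2 then show ?thesis using assms by (simp add: qbinom_out)
  next
    case 3 then show ?thesis using assms by (simp add: qbinom_out)
  next
    case 4 then show ?thesis using assms by (simp add: qbinom_out)
  next
    case 5
    define a where "a = nat k - 1"
    define b where "b = nat (n - k) - 1"
    have k: "k = int (Suc a)" and n: "n = int (Suc a + Suc b)" using 5 by (auto simp: a_def b_def)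
    show ?thesis unfolding k n by (rule qbinom_pascal_mid)
  qed
qed

lemma qbinom_pascal2:
  assumes "n \<ge> 1"
  shows "qbinom n k = qpow (n-k) * qbinom (n-1) (k-1) + qbinom (n-1) k"
proof -
  have "qbinom n k = qbinom n (n-k)" by (rule qbinom_sym)
  also have "\<dots> = qbinom (n-1) (n-k-1) + qpow (n-k) * qbinom (n-1) (n-k)"
    by (rule qbinom_pascal[OF assms])
  also have "qbinom (n-1) (n-k-1) = qbinom (n-1) k"
    using qbinom_sym[of "n-1" k] by (simp add: algebra_simps)
  also have "qbinom (n-1) (n-k) = qbinom (n-1) (k-1)"
    using qbinom_sym[of "n-1" "k-1"] by simp
  finally show ?thesis by simp
qed

definition t1 :: "int \<Rightarrow> int \<Rightarrow> int \<Rightarrow> int \<Rightarrow> int \<Rightarrow> int \<Rightarrow> int \<Rightarrow> rat fls" where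
  "t1 p K i b N M j = qpow (j*(p*K*j + K*b - p*i)) * qbinom (N+M) (M - K*j)"

definition t2 :: "int \<Rightarrow> int \<Rightarrow> int \<Rightarrow> int \<Rightarrow> int \<Rightarrow> int \<Rightarrow> int \<Rightarrow> rat fls" where
  "t2 p K i b N M j = qpow ((p*j+b)*(K*j+i)) * qbinom (N+M) (M - K*j - i)"

definition G :: "int \<Rightarrow> int \<Rightarrow> int \<Rightarrow> int \<Rightarrow> int \<Rightarrow> int \<Rightarrow> int set \<Rightarrow> rat fls" where
  "G p K i b N M S = (\<Sum>j\<in>S. t1 p K i b N M j - t2 p K i b N M j)"

definition F :: "int \<Rightarrow> int \<Rightarrow> int \<Rightarrow> int \<Rightarrow> int \<Rightarrow> int \<Rightarrow> rat fls" where
  "F p K i b N M = G p K i b N M {-(\<bar>N\<bar>+\<bar>M\<bar>+\<bar>i\<bar>)..\<bar>N\<bar>+\<bar>M\<bar>+\<bar>i\<bar>}"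

lemma Kj_ge: "K \<ge> 1 \<Longrightarrow> j \<ge> 0 \<Longrightarrow> K * j \<ge> (j::int)"
  using mult_right_mono[of 1 K j] by simp

lemma Kj_le: "K \<ge> 1 \<Longrightarrow> j \<le> 0 \<Longrightarrow> K * j \<le> (j::int)"
  using mult_right_mono_neg[of 1 K j] by simp

lemma t_vanish:
  assumes "K \<ge> 1" "\<bar>j\<bar> > \<bar>N\<bar>+\<bar>M\<bar>+\<bar>i\<bar>"
  shows "t1 p K i b N M j = 0" "t2 p K i b N M j = 0"
proof -
  have "(M - K*j < 0 \<or> M - K*j > N + M) \<and> (M - K*j - i < 0 \<or> M - K*j - i > N + M)"
  proof (cases "j \<ge> 0")
    case True
    then show ?thesis using Kj_ge[OF assms(1) True] assms(2) by auto
  next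
    case False
    have "K*j \<le> j" using Kj_le[OF assms(1)] False by simp
    then have "M - K*j > N + M" "M - K*j - i > N + M" using assms(2) False by linarith+
    then show ?thesis by simp
  qed
  then show "t1 p K i b N M j = 0" "t2 p K i b N M j = 0"
    unfolding t1_def t2_def by (auto simp: qbinom_out)
qed

lemma G_F:
  assumes "K \<ge> 1" "finite S" "{-(\<bar>N\<bar>+\<bar>M\<bar>+\<bar>i\<bar>)..\<bar>N\<bar>+\<bar>M\<bar>+\<bar>i\<bar>} \<subseteq> S"
  shows "G p K i b N M S = F p K i b N M"
  unfolding F_def G_def
  by (rule sum.mono_neutral_right[OF assms(2,3)]) (auto simp: t_vanish[OF assms(1)])

lemma t1_rec1:
  assumes "N + M \<ge> 1"
  shows "t1 p K i b N M j = qpow N * t1 p K i (b+1) N (M-1) j + t1 p K i b (N-1) M j"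
proof -
  have h: "qbinom (N+M) (M-K*j) = qpow (N+K*j) * qbinom (N+(M-1)) (M-1-K*j) + qbinom ((N-1)+M) (M-K*j)"
    using qbinom_pascal2[OF assms, of "M-K*j"] by (simp add: algebra_simps)
  have e: "j*(p*K*j + K*b - p*i) + (N+K*j) = N + j*(p*K*j + K*(b+1) - p*i)" by (simp add: algebra_simps)
  show ?thesis unfolding t1_def h
    unfolding distrib_left mult.assoc[symmetric] qpow_add e by simp
qed

lemma t2_rec1:
  assumes "N + M \<ge> 1"
  shows "t2 p K i b N M j = qpow N * t2 p K i (b+1) N (M-1) j + t2 p K i b (N-1) M j"
proof -
  have h: "qbinom (N+M) (M-K*j-i) = qpow (N+K*j+i) * qbinom (N+(M-1)) (M-1-K*j-i) + qbinom ((N-1)+M) (M-K*j-i)"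
    using qbinom_pascal2[OF assms, of "M-K*j-i"] by (simp add: algebra_simps)
  have e: "(p*j+b)*(K*j+i) + (N+K*j+i) = N + (p*j+(b+1))*(K*j+i)" by (simp add: algebra_simps)
  have e': "qpow ((p*j+b)*(K*j+i)) * qpow (N+K*j+i) = qpow N * qpow ((p*j+(b+1))*(K*j+i))"
    by (simp only: qpow_add e)
  show ?thesis unfolding t2_def h
    by (simp only: distrib_left[of "qpow ((p*j+b)*(K*j+i))"] mult.assoc[symmetric] e')
qed

lemma t1_rec2:
  assumes "N + M \<ge> 1"
  shows "t1 p K i b N M j = t1 p K i b N (M-1) j + qpow M * t1 p K i (b-1) (N-1) M j"
proof -
  have h: "qbinom (N+M) (M-K*j) = qbinom (N+(M-1)) (M-1-K*j) + qpow (M-K*j) * qbinom ((N-1)+M) (M-K*j)"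
    using qbinom_pascal[OF assms, of "M-K*j"] by (simp add: algebra_simps)
  have e: "j*(p*K*j + K*b - p*i) + (M-K*j) = M + j*(p*K*j + K*(b-1) - p*i)" by (simp add: algebra_simps)
  show ?thesis unfolding t1_def h
    unfolding distrib_left mult.assoc[symmetric] qpow_add e by simp
qed

lemma t2_rec2:
  assumes "N + M \<ge> 1"
  shows "t2 p K i b N M j = t2 p K i b N (M-1) j + qpow M * t2 p K i (b-1) (N-1) M j"
proof -
  have h: "qbinom (N+M) (M-K*j-i) = qbinom (N+(M-1)) (M-1-K*j-i) + qpow (M-K*j-i) * qbinom ((N-1)+M) (M-K*j-i)"
    using qbinom_pascal[OF assms, of "M-K*j-i"] by (simp add: algebra_simps)
  have e: "(p*j+b)*(K*j+i) + (M-K*j-i) = M + (p*j+(b-1))*(K*j+i)" by (simp add: algebra_simps)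
  have e': "qpow ((p*j+b)*(K*j+i)) * qpow (M-K*j-i) = qpow M * qpow ((p*j+(b-1))*(K*j+i))"
    by (simp only: qpow_add e)
  show ?thesis unfolding t2_def h
    by (simp only: distrib_left[of "qpow ((p*j+b)*(K*j+i))"] mult.assoc[symmetric] e')
qed


lemma G_split: "G p K i b N M S = (\<Sum>j\<in>S. t1 p K i b N M j) - (\<Sum>j\<in>S. t2 p K i b N M j)"
  unfolding G_def by (simp add: sum_subtractf)

lemma F_rec1:
  assumes "K \<ge> 1" "N + M \<ge> 1"
  shows "F p K i b N M = qpow N * F p K i (b+1) N (M-1) + F p K i b (N-1) M"
proof -
  define R where "R = \<bar>N\<bar>+\<bar>M\<bar>+\<bar>i\<bar> + 2"
  define S where "S = {-R..R}"
  have fin: "finite S" by (simp add: S_def)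
  have "F p K i b N M = G p K i b N M S"
    by (rule G_F[symmetric, OF assms(1) fin]) (auto simp: S_def R_def)
  moreover have "F p K i (b+1) N (M-1) = G p K i (b+1) N (M-1) S"
    by (rule G_F[symmetric, OF assms(1) fin]) (auto simp: S_def R_def)
  moreover have "F p K i b (N-1) M = G p K i b (N-1) M S"
    by (rule G_F[symmetric, OF assms(1) fin]) (auto simp: S_def R_def)
  moreover have "G p K i b N M S = qpow N * G p K i (b+1) N (M-1) S + G p K i b (N-1) M S"
    unfolding G_def sum_distrib_left sum.distrib[symmetric]
    by (rule sum.cong[OF refl]) (simp add: t1_rec1[OF assms(2)] t2_rec1[OF assms(2)] algebra_simps)
  ultimately show ?thesis by simp
qed

lemma F_rec2:
  assumes "K \<ge> 1" "N + M \<ge> 1"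
  shows "F p K i b N M = F p K i b N (M-1) + qpow M * F p K i (b-1) (N-1) M"
proof -
  define R where "R = \<bar>N\<bar>+\<bar>M\<bar>+\<bar>i\<bar> + 2"
  define S where "S = {-R..R}"
  have fin: "finite S" by (simp add: S_def)
  have "F p K i b N M = G p K i b N M S"
    by (rule G_F[symmetric, OF assms(1) fin]) (auto simp: S_def R_def)
  moreover have "F p K i b N (M-1) = G p K i b N (M-1) S"
    by (rule G_F[symmetric, OF assms(1) fin]) (auto simp: S_def R_def)
  moreover have "F p K i (b-1) (N-1) M = G p K i (b-1) (N-1) M S"
    by (rule G_F[symmetric, OF assms(1) fin]) (auto simp: S_def R_def)
  moreover have "G p K i b N M S = G p K i b N (M-1) S + qpow M * G p K i (b-1) (N-1) M S"
    unfolding G_def sum_distrib_left sum.distrib[symmetric]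
    by (rule sum.cong[OF refl]) (simp add: t1_rec2[OF assms(2)] t2_rec2[OF assms(2)] algebra_simps)
  ultimately show ?thesis by simp
qed

lemma F_corner0:
  assumes "K \<ge> 1" "N - M + i = 0"
  shows "F p K i 0 N M = 0"
proof -
  define B where "B = \<bar>N\<bar>+\<bar>M\<bar>+\<bar>i\<bar>"
  have "(\<Sum>j\<in>{-B..B}. t1 p K i 0 N M j) = (\<Sum>j\<in>{-B..B}. t2 p K i 0 N M j)"
  proof (rule sum.reindex_bij_witness[of _ uminus uminus])
    fix a assume "a \<in> {-B..B}"
    have "qbinom (N+M) (M - K*(-a) - i) = qbinom (N+M) (N + M - (M - K*(-a) - i))"
      by (rule qbinom_sym)
    also have "N + M - (M - K*(-a) - i) = M - K*a" using assms(2) by (simp add: algebra_simps)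
    finally show "t2 p K i 0 N M (- a) = t1 p K i 0 N M a"
      unfolding t1_def t2_def by (simp add: algebra_simps)
  qed auto
  then show ?thesis unfolding F_def G_split B_def by simp
qed

lemma F_cornerp:
  assumes "K \<ge> 1" "N = M + K - i"
  shows "F p K i p N M = 0"
proof -
  define B where "B = \<bar>N\<bar>+\<bar>M\<bar>+\<bar>i\<bar>"
  define S where "S = {-B-1..B}"
  have fin: "finite S" by (simp add: S_def)
  have "F p K i p N M = G p K i p N M S"
    by (rule G_F[symmetric, OF assms(1) fin]) (auto simp: S_def B_def)
  moreover have "(\<Sum>j\<in>S. t1 p K i p N M j) = (\<Sum>j\<in>S. t2 p K i p N M j)"
  proof (rule sum.reindex_bij_witness[of _ "\<lambda>j. -j-1" "\<lambda>j. -j-1"])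
    fix a assume "a \<in> S"
    have "qbinom (N+M) (M - K*(-a-1) - i) = qbinom (N+M) (N + M - (M - K*(-a-1) - i))"
      by (rule qbinom_sym)
    also have "N + M - (M - K*(-a-1) - i) = M - K*a" using assms(2) by (simp add: algebra_simps)
    finally show "t2 p K i p N M (- a - 1) = t1 p K i p N M a"
      unfolding t1_def t2_def by (simp add: algebra_simps)
  qed (auto simp: S_def)
  ultimately show ?thesis unfolding G_split by simp
qed

lemma nn_add: "nonneg_coeffs a \<Longrightarrow> nonneg_coeffs b \<Longrightarrow> nonneg_coeffs (a + b)"
  by (simp add: nonneg_coeffs_def)

lemma nn_qpow: "nonneg_coeffs a \<Longrightarrow> nonneg_coeffs (qpow e * a)"
  by (simp add: nonneg_coeffs_def nth_qpow_times)

lemma nn_zero: "nonneg_coeffs 0"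
  by (simp add: nonneg_coeffs_def)

lemma nn_one: "nonneg_coeffs 1"
  by (simp add: nonneg_coeffs_def)

lemma nn_sum: "(\<And>j. j \<in> S \<Longrightarrow> nonneg_coeffs (f j)) \<Longrightarrow> nonneg_coeffs (\<Sum>j\<in>S. f j)"
  by (auto simp: nonneg_coeffs_def fls_nth_sum intro!: sum_nonneg)

lemma F_base:
  assumes "K \<ge> 1" "N + M = 0" "0 \<le> b" "b \<le> p" "0 \<le> N-M-b+i" "N-M-b+i \<le> K-p" "0 < i" "i < K"
  shows "nonneg_coeffs (F p K i b N M)"
proof -
  have t2z: "t2 p K i b N M j = 0" for j
  proof -
    have "M - K*j - i \<noteq> 0"
    proof
      assume h: "M - K*j - i = 0"
      show False
      proof (cases "j \<ge> 0")
        case True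
        then have "K*j \<ge> 0" using assms(1) by simp
        then show False using h assms by linarith
      next
        case False
        then have "K*j \<le> K*(-1)" using assms(1) by (intro mult_left_mono) auto
        then show False using h assms by linarith
      qed
    qed
    then have "M - K*j - i < 0 \<or> M - K*j - i > N + M" using assms(2) by linarith
    then show ?thesis unfolding t2_def by (simp add: qbinom_out)
  qed
  have t1nn: "nonneg_coeffs (t1 p K i b N M j)" for j
  proof -
    have "qbinom (N+M) (M-K*j) = 0 \<or> qbinom (N+M) (M-K*j) = 1"
    proof (cases "M - K*j = 0")
      case True then show ?thesis using assms(2) by simp
    next
      case False then have "M-K*j < 0 \<or> M-K*j > N + M" using assms(2) by linarith
      then show ?thesis by (simp add: qbinom_out)
    qed
    then show ?thesis unfolding t1_def using nn_qpow[OF nn_zero] nn_qpow[OF nn_one] by auto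
  qed
  show ?thesis unfolding F_def G_def by (rule nn_sum) (simp add: t2z t1nn)
qed

lemma F_nonneg:
  assumes "p > 0" "K > p" "0 < i" "i < K"
  shows "\<And>N M b. N + M = int n \<Longrightarrow> 0 \<le> b \<Longrightarrow> b \<le> p \<Longrightarrow> 0 \<le> N-M-b+i \<Longrightarrow> N-M-b+i \<le> K-p
     \<Longrightarrow> nonneg_coeffs (F p K i b N M)"
proof (induction n)
  case 0
  then show ?case using F_base[of K N M b p i] assms by simp
next
  case (Suc n)
  have K1: "K \<ge> 1" using assms by simp
  have n1: "N + M \<ge> 1" using Suc.prems by simp
  consider "b = 0 \<and> N-M-b+i = 0" | "b = p \<and> N-M-b+i = K-p" | "N-M-b+i < K-p \<and> b > 0"
    | "N-M-b+i > 0 \<and> b < p" using Suc.prems assms by linarith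
  then show ?case
  proof cases
    case 1
    then show ?thesis using F_corner0[OF K1, of N M i p] nn_zero by simp
  next
    case 2
    then show ?thesis using F_cornerp[OF K1, of N M i p] nn_zero by simp
  next
    case 3
    show ?thesis unfolding F_rec2[OF K1 n1]
      by (intro nn_add nn_qpow Suc.IH) (use Suc.prems 3 in auto)
  next
    case 4
    show ?thesis unfolding F_rec1[OF K1 n1]
      by (intro nn_add nn_qpow Suc.IH) (use Suc.prems 4 in auto)
  qed
qed


lemma supp_bound:
  fixes K j N M i :: int
  assumes "K \<ge> 1" "\<bar>j\<bar> > \<bar>N\<bar>+\<bar>M\<bar>+\<bar>i\<bar>"
  shows "(M - K*j < 0 \<or> M - K*j > N + M) \<and> (M - K*j - i < 0 \<or> M - K*j - i > N + M)"
proof (cases "j \<ge> 0")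
  case True
  then show ?thesis using Kj_ge[OF assms(1) True] assms(2) by auto
next
  case False
  have "K*j \<le> j" using Kj_le[OF assms(1)] False by simp
  then have "M - K*j > N + M" "M - K*j - i > N + M" using assms(2) False by linarith+
  then show ?thesis by simp
qed

lemma D_F:
  assumes "K \<ge> 1"
  shows "D K i N M (p - b) b = F p K i b N M"
proof -
  define B where "B = \<bar>N\<bar>+\<bar>M\<bar>+\<bar>i\<bar>"
  define A1 where "A1 = {j. 0 \<le> M - K*j \<and> M - K*j \<le> M + N}"
  define A2 where "A2 = {j. 0 \<le> M - K*j - i \<and> M - K*j - i \<le> M + N}"
  have s1: "A1 \<subseteq> {-B..B}"
  proof
    fix j assume "j \<in> A1"
    then show "j \<in> {-B..B}" using supp_bound[OF assms, of N M i j] unfolding A1_def B_def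
      by (cases "\<bar>j\<bar> > \<bar>N\<bar>+\<bar>M\<bar>+\<bar>i\<bar>") auto
  qed
  have s2: "A2 \<subseteq> {-B..B}"
  proof
    fix j assume "j \<in> A2"
    then show "j \<in> {-B..B}" using supp_bound[OF assms, of N M i j] unfolding A2_def B_def
      by (cases "\<bar>j\<bar> > \<bar>N\<bar>+\<bar>M\<bar>+\<bar>i\<bar>") auto
  qed
  have "(\<Sum>j\<in>A1. qpow (j*((p - b + b)*K*j + K*b - (p - b + b)*i)) * qbinom (M + N) (M - K*j))
      = (\<Sum>j\<in>{-B..B}. t1 p K i b N M j)"
  proof (rule sum.mono_neutral_cong_left[OF _ s1])
    show "\<forall>j\<in>{-B..B} - A1. t1 p K i b N M j = 0"
    proof
      fix j assume "j \<in> {-B..B} - A1"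
      then have "M - K*j < 0 \<or> M - K*j > N + M" by (auto simp: A1_def)
      then show "t1 p K i b N M j = 0" by (simp add: t1_def qbinom_out)
    qed
  qed (auto simp: t1_def add.commute)
  moreover have "(\<Sum>j\<in>A2. qpow (((p - b + b)*j + b)*(K*j + i)) * qbinom (M + N) (M - K*j - i))
      = (\<Sum>j\<in>{-B..B}. t2 p K i b N M j)"
  proof (rule sum.mono_neutral_cong_left[OF _ s2])
    show "\<forall>j\<in>{-B..B} - A2. t2 p K i b N M j = 0"
    proof
      fix j assume "j \<in> {-B..B} - A2"
      then have "M - K*j - i < 0 \<or> M - K*j - i > N + M" by (auto simp: A2_def)
      then show "t2 p K i b N M j = 0" by (simp add: t2_def qbinom_out)
    qed
  qed (auto simp: t2_def add.commute)
  ultimately show ?thesis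
    unfolding D_def F_def G_split B_def[symmetric] A1_def[symmetric] A2_def[symmetric] by simp
qed

lemma floor_half: "\<lfloor>of_int x / (2::rat)\<rfloor> = x div 2"
  using floor_divide_of_int_eq[of x 2] by simp

lemma ceil_half: "\<lceil>of_int x / (2::rat)\<rceil> = - ((-x) div 2)"
  unfolding ceiling_def using floor_half[of "-x"] by simp

theorem theorem2p2:
  fixes L p' p r s :: int
  assumes "L \<ge> 0" and "p > 0" and "p' > 0" and "p' > p"
    and "0 < r" and "r < p" and "0 < s" and "s < p'"
  shows "D p' s \<lceil>of_int (L + r - s) / (2::rat)\<rceil> \<lfloor>of_int (L - r + s) / (2::rat)\<rfloor> (p - r) r =
           (\<Sum>j\<in>{j. 0 \<le> \<lfloor>of_int (L - r + s) / (2::rat)\<rfloor> - j*p' \<and> \<lfloor>of_int (L - r + s) / (2::rat)\<rfloor> - j*p' \<le> L}.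
              qpow (j^2*p*p' + (r*p' - s*p)*j) * qbinom L (\<lfloor>of_int (L - r + s) / (2::rat)\<rfloor> - j*p'))
         - (\<Sum>j\<in>{j. 0 \<le> \<lfloor>of_int (L - r - s) / (2::rat)\<rfloor> - j*p' \<and> \<lfloor>of_int (L - r - s) / (2::rat)\<rfloor> - j*p' \<le> L}.
              qpow ((j*p + r)*(j*p' + s)) * qbinom L (\<lfloor>of_int (L - r - s) / (2::rat)\<rfloor> - j*p'))
       \<and> nonneg_coeffs (D p' s \<lceil>of_int (L + r - s) / (2::rat)\<rceil> \<lfloor>of_int (L - r + s) / (2::rat)\<rfloor> (p - r) r)"
  proof -
  define M0 where "M0 = (L - r + s) div 2"
  define N0 where "N0 = - ((-(L + r - s)) div 2)"
  have hM: "\<lfloor>of_int (L - r + s) / (2::rat)\<rfloor> = M0" unfolding M0_def by (rule floor_half)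
  have hN: "\<lceil>of_int (L + r - s) / (2::rat)\<rceil> = N0" unfolding N0_def by (rule ceil_half)
  have hM2: "\<lfloor>of_int (L - r - s) / (2::rat)\<rfloor> = M0 - s"
  proof -
    have "L - r - s = (L - r + s) + (-s) * 2" by simp
    then have "(L - r - s) div 2 = (L - r + s) div 2 - s" by presburger
    then show ?thesis unfolding floor_half M0_def .
  qed
  have NM: "M0 + N0 = L" unfolding M0_def N0_def by presburger
  have d0: "0 \<le> N0 - M0 - r + s" and d1: "N0 - M0 - r + s \<le> 1"
    unfolding M0_def N0_def by presburger+
  have eq: "D p' s N0 M0 (p - r) r =
      (\<Sum>j\<in>{j. 0 \<le> M0 - j*p' \<and> M0 - j*p' \<le> L}. qpow (j^2*p*p' + (r*p' - s*p)*j) * qbinom L (M0 - j*p'))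
    - (\<Sum>j\<in>{j. 0 \<le> M0 - s - j*p' \<and> M0 - s - j*p' \<le> L}. qpow ((j*p + r)*(j*p' + s)) * qbinom L (M0 - s - j*p'))"
    unfolding D_def
  proof (intro arg_cong2[where f = minus] sum.cong)
    show "{j. 0 \<le> M0 - p' * j \<and> M0 - p' * j \<le> M0 + N0} = {j. 0 \<le> M0 - j * p' \<and> M0 - j * p' \<le> L}"
      using NM by (auto simp: mult.commute)
    show "{j. 0 \<le> M0 - p' * j - s \<and> M0 - p' * j - s \<le> M0 + N0} = {j. 0 \<le> M0 - s - j * p' \<and> M0 - s - j * p' \<le> L}"
      using NM by (auto simp: mult.commute algebra_simps)
  next
    fix j
    have "j * ((p - r + r) * p' * j + p' * r - (p - r + r) * s) = j^2*p*p' + (r*p' - s*p)*j"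
      by (simp add: power2_eq_square algebra_simps)
    then show "qpow (j * ((p - r + r) * p' * j + p' * r - (p - r + r) * s)) * qbinom (M0 + N0) (M0 - p' * j)
        = qpow (j^2*p*p' + (r*p' - s*p)*j) * qbinom L (M0 - j*p')"
      using NM by (simp add: mult.commute)
  next
    fix j
    have a1: "((p - r + r) * j + r) * (p' * j + s) = (j*p + r)*(j*p' + s)"
      by (simp add: algebra_simps)
    have a2: "M0 - p' * j - s = M0 - s - j*p'" by (simp add: algebra_simps)
    show "qpow (((p - r + r) * j + r) * (p' * j + s)) * qbinom (M0 + N0) (M0 - p' * j - s)
        = qpow ((j*p + r)*(j*p' + s)) * qbinom L (M0 - s - j*p')"
      by (simp only: a1 a2 NM)
  qed
  have nn: "nonneg_coeffs (D p' s N0 M0 (p - r) r)"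
  proof -
    have "D p' s N0 M0 (p - r) r = F p p' s r N0 M0" by (rule D_F) (use assms in simp)
    moreover have "nonneg_coeffs (F p p' s r N0 M0)"
      by (rule F_nonneg[where n="nat L"]) (use assms d0 d1 NM in auto)
    ultimately show ?thesis by simp
  qed
  show ?thesis unfolding hM hN hM2 using eq nn by simp
qed

end
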